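(* Let $p$ and $v$ be two distinct points in the plane and let $R$ be a ray emanating from $v$ that does not pass through $p$. Let $c_1,c_2$ be constants with $c_2>c_1>0$. Then the largest value of $|pq|/\max\{|vq|,c_2\}$ over all points $q$ on $R$ with $|pq|>|vq|\geqslant c_1$ is achieved when $|vq|=c_1$ or $|vq|=c_2$.
   Context: $|xy|$ denotes the Euclidean distance between points $x$ and $y$. *)

theory Defs
  imports "HOL-Analysis.Analysis"
begin

text \<open>The ray emanating from v in direction d (d assumed nonzero).\<close>
definition ray :: "real^2 \<Rightarrow> real^2 \<Rightarrow> (real^2) set" where
  "ray v d = {v + t *\<^sub>R d | t. t \<ge> 0}"

end

theory Submission
  imports Defs
begin

lemma chord_id: "(c2 - t) * (c1^2 - 2*a*c1 + b) + (t - c1) * (c2^2 - 2*a*c2+b) - (c2 - c1) * (t^2-2*a*t+b) = (t - c1) * (c2 - t) * (c2 - (c1::real))"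
  by algebra

lemma key_real:
  fixes D :: "real \<Rightarrow> real" and a b c1 c2 t :: real
  assumes D0: "\<And>t. D t \<ge> 0" and Dq: "\<And>t. (D t)^2 = t^2 - 2*a*t + b"
    and c1p: "0 < c1" and c12: "c1 < c2" and c1t: "c1 \<le> t" and tD: "t < D t"
  shows "D t / max t c2 \<le> max (D c1 / max c1 c2) (D c2 / max c2 c2)"
proof -
  have "(D 0)^2 = b" using Dq[of 0] by simp
  hence b0: "b \<ge> 0" by (metis zero_le_power2)
  show ?thesis
  proof (cases "t \<le> c2")
    case True
    have chord: "(c2 - c1) * (D t)^2 \<le> (c2 - t) * (D c1)^2 + (t - c1) * (D c2)^2"
    proof -
      have "(c2 - t) * (D c1)^2 + (t - c1) * (D c2)^2 - (c2 - c1) * (D t)^2 = (t - c1) * (c2 - t) * (c2 - c1)"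
        unfolding Dq[of c1] Dq[of c2] Dq[of t] by (rule chord_id)
      moreover have "(t - c1) * (c2 - t) * (c2 - c1) \<ge> 0" using True c1t c12 by (intro mult_nonneg_nonneg) auto
      ultimately show ?thesis by linarith
    qed
    let ?M = "max ((D c1)^2) ((D c2)^2)"
    have "(c2 - t) * (D c1)^2 + (t - c1) * (D c2)^2 \<le> (c2 - t) * ?M + (t - c1) * ?M"
      using True \<open>c1 \<le> t\<close> by (intro add_mono mult_left_mono max.cobounded1 max.cobounded2) auto
    also have "\<dots> = (c2 - c1) * ?M" by algebra
    finally have "(c2 - c1) * (D t)^2 \<le> (c2 - c1) * ?M" using chord by linarith
    hence Dt2: "(D t)^2 \<le> ?M" by (rule mult_left_le_imp_le) (use \<open>c1 < c2\<close> in simp)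
    have Dtm: "D t \<le> max (D c1) (D c2)"
    proof (cases "(D c2)^2 \<le> (D c1)^2")
      case True
      hence "(D t)^2 \<le> (D c1)^2" using Dt2 by (simp add: max_def)
      hence "D t \<le> D c1" using power2_le_imp_le D0 by blast
      thus ?thesis by (simp add: max.coboundedI1)
    next
      case False
      hence "(D t)^2 \<le> (D c2)^2" using Dt2 by (simp add: max_def)
      hence "D t \<le> D c2" using power2_le_imp_le D0 by blast
      thus ?thesis by (simp add: max.coboundedI2)
    qed
    have c2p: "c2 > 0" using c12 c1p by simp
    have "D t / c2 \<le> max (D c1) (D c2) / c2" using Dtm c2p by (simp add: divide_right_mono)
    also have "\<dots> = max (D c1 / c2) (D c2 / c2)" using c2p by (simp add: max_def divide_le_cancel)
    finally show ?thesis using True c12 by (simp add: max_def)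
  next
    case False
    have tpos: "t > 0" using False c1p c12 by simp
    have hb: "b > 2*a*t"
    proof -
      have "(D t)^2 > t^2" using tD tpos by (intro power_strict_mono) auto
      thus ?thesis unfolding Dq by simp
    qed
    have fac: "b*(t+c2) - 2*a*c2*t \<ge> 0"
    proof (cases "a \<le> 0")
      case True
      have "b*(t+c2) \<ge> 0" using b0 tpos c1p c12 by simp
      moreover have "a*c2*t \<le> 0" using True tpos c1p c12 by (simp add: mult_nonpos_nonneg)
      ultimately show ?thesis by simp
    next
      case f2: False
      have "2*a*c2*t \<le> 2*a*t*t" using f2 False tpos by simp
      also have "\<dots> \<le> b * t" using hb tpos by (simp add: mult_right_mono)
      also have "\<dots> \<le> b*(t+c2)" using b0 c1p c12 tpos by (simp add: mult_left_mono)
      finally show ?thesis by simp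
    qed
    have sq: "(D t * c2)^2 \<le> (D c2 * t)^2"
    proof -
      have "(D c2 * t)^2 - (D t * c2)^2 = (t - c2) * (b*(t+c2) - 2*a*c2*t)"
      proof -
        have "(D c2 * t)^2 - (D t * c2)^2 = (D c2)^2 * t^2 - (D t)^2 * c2^2" by (simp add: power_mult_distrib)
        also have "\<dots> = (t - c2) * (b*(t+c2) - 2*a*c2*t)" unfolding Dq by algebra
        finally show ?thesis .
      qed
      moreover have "(t - c2) * (b*(t+c2) - 2*a*c2*t) \<ge> 0" using fac False by simp
      ultimately show ?thesis by linarith
    qed
    hence "D t * c2 \<le> D c2 * t"
      by (rule power2_le_imp_le) (use D0 tpos in simp)
    hence "D t / t \<le> D c2 / c2" using tpos c1p c12
      by (simp add: divide_simps mult.commute)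
    thus ?thesis using False c1p c12 by (simp add: max_def)
  qed
qed

lemma inner_line: "norm (u::real^2) = 1 \<Longrightarrow> inner (x - t *\<^sub>R u) (x - t *\<^sub>R u) = t^2 - 2*(inner x u)*t + (norm x)^2"
proof -
  assume nu: "norm u = 1"
  have uu: "inner u u = 1" using nu by (simp add: dot_square_norm)
  have "inner (x - t *\<^sub>R u) (x - t *\<^sub>R u) = inner x x - 2 * t * inner x u + t*t* inner u u"
    by (simp add: inner_diff_left inner_diff_right inner_commute algebra_simps)
  thus ?thesis using uu by (simp add: dot_square_norm power2_eq_square algebra_simps)
qed

theorem lemma4:
  fixes p v d :: "real^2" and c1 c2 :: real
  assumes "p \<noteq> v" and "d \<noteq> 0" and "p \<notin> ray v d"
    and "0 < c1" and "c1 < c2"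
  shows "\<exists>q'\<in>ray v d. (dist v q' = c1 \<or> dist v q' = c2) \<and>
           (\<forall>q\<in>ray v d. dist p q > dist v q \<and> dist v q \<ge> c1 \<longrightarrow>
              dist p q / max (dist v q) c2 \<le> dist p q' / max (dist v q') c2)"
proof -
  define u where "u = d /\<^sub>R norm d"
  have nu: "norm u = 1" using assms(2) by (simp add: u_def)
  define Q where "Q t = v + t *\<^sub>R u" for t
  define D where "D t = dist p (Q t)" for t
  define a where "a = inner (p - v) u"
  define b where "b = (norm (p - v))^2"
  have Dq: "(D t)^2 = t^2 - 2*a*t + b" for t
  proof -
    have e: "p - Q t = (p - v) - t *\<^sub>R u" by (simp add: Q_def algebra_simps)
    have "(D t)^2 = inner ((p - v) - t *\<^sub>R u) ((p - v) - t *\<^sub>R u)"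
      unfolding D_def dist_norm e power2_norm_eq_inner by simp
    also have "\<dots> = t^2 - 2*a*t + b"
      unfolding a_def b_def by (rule inner_line[OF nu])
    finally show ?thesis .
  qed
  have Qray: "t \<ge> 0 \<Longrightarrow> Q t \<in> ray v d" for t
    unfolding ray_def Q_def u_def using assms(2)
    by (auto intro!: exI[of _ "t / norm d"])
  have dQ: "t \<ge> 0 \<Longrightarrow> dist v (Q t) = t" for t
    unfolding Q_def using nu by (simp add: dist_norm)
  have rayQ: "q \<in> ray v d \<Longrightarrow> \<exists>t\<ge>0. q = Q t" for q
  proof -
    assume "q \<in> ray v d"
    then obtain s where s: "s \<ge> 0" "q = v + s *\<^sub>R d" unfolding ray_def by auto
    have "q = Q (s * norm d)" unfolding Q_def u_def using s assms(2) by simp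
    moreover have "s * norm d \<ge> 0" using s by simp
    ultimately show ?thesis by blast
  qed
  define F where "F t = D t / max t c2" for t
  define t' where "t' = (if F c1 \<ge> F c2 then c1 else c2)"
  have t'0: "t' \<ge> 0" using assms unfolding t'_def by auto
  show ?thesis
  proof (rule bexI[of _ "Q t'"], intro conjI ballI impI)
    show "Q t' \<in> ray v d" using Qray t'0 .
    show "dist v (Q t') = c1 \<or> dist v (Q t') = c2" using dQ t'0 unfolding t'_def by auto
    fix q assume q: "q \<in> ray v d" and h: "dist v q < dist p q \<and> c1 \<le> dist v q"
    obtain t where t: "t \<ge> 0" "q = Q t" using rayQ q by auto
    have dt: "dist v q = t" using dQ t by simp
    have "F t \<le> max (F c1) (F c2)"
      unfolding F_def
      by (rule key_real[of D a b c1 c2 t]) (use Dq h dt t assms in \<open>auto simp: D_def\<close>)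
    also have "\<dots> = F t'" unfolding t'_def by auto
    finally show "dist p q / max (dist v q) c2 \<le> dist p (Q t') / max (dist v (Q t')) c2"
      using dt t dQ[OF t'0] unfolding F_def D_def by simp
  qed
qed

end
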